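(* Fix $N\ge 3$. For $(p_0,p_1,p_3)\in(0,1)^3$ let $\mu_B:=\mu(p_0,p_1,p_1,p_3)$ and $\mu_C:=\mu\big((1/2+p_0)/2,(1/2+p_1)/2,(1/2+p_1)/2,(1/2+p_3)/2\big)$, with $\mu$ as defined in the context. Call $(p_0,p_1,p_3)$ a point of the Parrondo region if $\mu_B\le 0$ and $\mu_C>0$, and a point of the anti-Parrondo region if $\mu_B\ge 0$ and $\mu_C<0$. With $q_m:=1-p_m$ for $m=0,1,3$, the vector $(p_0,p_1,p_3)$ belongs to the Parrondo region if and only if $(q_3,q_1,q_0)$ belongs to the anti-Parrondo region. In particular, the Parrondo region and the anti-Parrondo region have the same (Lebesgue) volume.
   Context: Model: $N\ge 3$ players labeled $1,\ldots,N$ sit in a circle (indices mod $N$). The state space is $\Sigma=\{0,1\}^N$, with $x_i=1$ meaning player $i$ won his most recent game. For $\bm x\in\Sigma$ let $m_i(\bm x):=2x_{i-1}+x_{i+1}$ and let $\bm x^i$ be $\bm x$ with the $i$th coordinate flipped. Given $r_0,r_1,r_2,r_3\in(0,1)$ (with $s_m:=1-r_m$), each turn a uniformly random player $i$ tosses a coin with heads probability $r_{m_i(\bm x)}$, winning one unit on heads (status becomes $1$) and losing one unit on tails (status becomes $0$). This gives the irreducible aperiodic Markov chain on $\Sigma$ with $P(\bm x,\bm x^i)=N^{-1}r_{m_i(\bm x)}$ if $x_i=0$, $=N^{-1}s_{m_i(\bm x)}$ if $x_i=1$, and $P(\bm x,\bm x)=N^{-1}\big(\sum_{i:x_i=0}s_{m_i(\bm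 x)}+\sum_{i:x_i=1}r_{m_i(\bm x)}\big)$; let $\bm\pi$ be its stationary distribution and define the mean profit per turn $$\mu(r_0,r_1,r_2,r_3):=\sum_{\bm x\in\Sigma}\pi(\bm x)\sum_{i=1}^N N^{-1}\big[r_{m_i(\bm x)}-s_{m_i(\bm x)}\big],$$ the almost-sure limit of $S_n/n$ for the ensemble's cumulative profit $S_n$. Game $A$ uses a fair coin ($p=1/2$) for every player; game $B$ uses $(p_0,p_1,p_1,p_3)$; game $C=\tfrac12(A+B)$ (a fair coin toss decides which game is played each turn) therefore corresponds to parameters $r_m=(1/2+p_m)/2$. *)

theory Defs
  imports "HOL-Analysis.Analysis"
begin

text \<open>Players are labelled 0,...,N-1 (instead of 1,...,N), indices taken mod N.
  A state is a function x :: nat => bool that is False outside {0..<N};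
  x i = True means player i won his most recent game.\<close>

definition states :: "nat \<Rightarrow> (nat \<Rightarrow> bool) set" where
  "states N = {x. \<forall>i. N \<le> i \<longrightarrow> \<not> x i}"

definition bit :: "bool \<Rightarrow> nat" where
  "bit b = (if b then 1 else 0)"

definition midx :: "nat \<Rightarrow> (nat \<Rightarrow> bool) \<Rightarrow> nat \<Rightarrow> nat" where
  "midx N x i = 2 * bit (x ((i + N - 1) mod N)) + bit (x ((i + 1) mod N))"

definition flip :: "(nat \<Rightarrow> bool) \<Rightarrow> nat \<Rightarrow> (nat \<Rightarrow> bool)" where
  "flip x i = x(i := \<not> x i)"

definition par4 :: "real \<Rightarrow> real \<Rightarrow> real \<Rightarrow> real \<Rightarrow> nat \<Rightarrow> real" where
  "par4 r0 r1 r2 r3 m = (if m = 0 then r0 else if m = 1 then r1 else if m = 2 then r2 else r3)"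

definition trans :: "nat \<Rightarrow> (nat \<Rightarrow> real) \<Rightarrow> (nat \<Rightarrow> bool) \<Rightarrow> (nat \<Rightarrow> bool) \<Rightarrow> real" where
  "trans N r x y =
     (\<Sum>i<N. if y = flip x i
             then (if x i then 1 - r (midx N x i) else r (midx N x i)) / real N
             else 0)
   + (if y = x
      then (\<Sum>i<N. if x i then r (midx N x i) else 1 - r (midx N x i)) / real N
      else 0)"

definition is_stationary :: "nat \<Rightarrow> (nat \<Rightarrow> real) \<Rightarrow> ((nat \<Rightarrow> bool) \<Rightarrow> real) \<Rightarrow> bool" where
  "is_stationary N r \<pi> \<longleftrightarrow>
     (\<forall>x. x \<notin> states N \<longrightarrow> \<pi> x = 0) \<and>
     (\<forall>x \<in> states N. 0 \<le> \<pi> x) \<and>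
     (\<Sum>x\<in>states N. \<pi> x) = 1 \<and>
     (\<forall>y \<in> states N. (\<Sum>x\<in>states N. \<pi> x * trans N r x y) = \<pi> y)"

text \<open>The (unique, by irreducibility) stationary distribution.\<close>
definition stat_dist :: "nat \<Rightarrow> (nat \<Rightarrow> real) \<Rightarrow> (nat \<Rightarrow> bool) \<Rightarrow> real" where
  "stat_dist N r = (THE \<pi>. is_stationary N r \<pi>)"

definition mu :: "nat \<Rightarrow> real \<Rightarrow> real \<Rightarrow> real \<Rightarrow> real \<Rightarrow> real" where
  "mu N r0 r1 r2 r3 =
     (let r = par4 r0 r1 r2 r3 in
      \<Sum>x\<in>states N. stat_dist N r x *
        (\<Sum>i<N. (r (midx N x i) - (1 - r (midx N x i))) / real N))"

definition muB :: "nat \<Rightarrow> real \<Rightarrow> real \<Rightarrow> real \<Rightarrow> real" where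
  "muB N p0 p1 p3 = mu N p0 p1 p1 p3"

definition muC :: "nat \<Rightarrow> real \<Rightarrow> real \<Rightarrow> real \<Rightarrow> real" where
  "muC N p0 p1 p3 = mu N ((1/2 + p0)/2) ((1/2 + p1)/2) ((1/2 + p1)/2) ((1/2 + p3)/2)"

definition unit_open_cube :: "(real \<times> real \<times> real) set" where
  "unit_open_cube = {(p0, p1, p3). 0 < p0 \<and> p0 < 1 \<and> 0 < p1 \<and> p1 < 1 \<and> 0 < p3 \<and> p3 < 1}"

definition parrondo_region :: "nat \<Rightarrow> (real \<times> real \<times> real) set" where
  "parrondo_region N = {(p0, p1, p3). (p0, p1, p3) \<in> unit_open_cube \<and>
       muB N p0 p1 p3 \<le> 0 \<and> 0 < muC N p0 p1 p3}"

definition anti_parrondo_region :: "nat \<Rightarrow> (real \<times> real \<times> real) set" where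
  "anti_parrondo_region N = {(p0, p1, p3). (p0, p1, p3) \<in> unit_open_cube \<and>
       0 \<le> muB N p0 p1 p3 \<and> muC N p0 p1 p3 < 0}"

end

theory Submission
  imports Defs "Jordan_Normal_Form.Determinant"
begin


lemma Basis3: "(Basis :: (real\<times>real\<times>real) set) = {(1,0,0),(0,1,0),(0,0,1)}"
  by (auto simp: Basis_prod_def zero_prod_def)

lemma prod_Basis3: "(\<Prod>b\<in>(Basis :: (real\<times>real\<times>real) set). f b) = f (1,0,0) * f (0,1,0) * f (0,0,1)"
  by (simp add: Basis3 mult.assoc)

definition tmapX :: "real\<times>real\<times>real \<Rightarrow> real\<times>real\<times>real" where
  "tmapX = (\<lambda>(a,b,c). (1-c,1-b,1-a))"

lemma tmapX_meas[measurable]: "tmapX \<in> borel \<rightarrow>\<^sub>M borel"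
  unfolding tmapX_def case_prod_unfold
  by (intro borel_measurable_continuous_onI continuous_intros)

lemma distr_tmapX: "distr lborel borel tmapX = lborel"
proof (rule lborel_eqI[symmetric])
  fix l u :: "real\<times>real\<times>real"
  assume le: "\<And>b. b \<in> Basis \<Longrightarrow> l \<bullet> b \<le> u \<bullet> b"
  obtain l1 l2 l3 where l: "l = (l1,l2,l3)" by (cases l) auto
  obtain u1 u2 u3 where u: "u = (u1,u2,u3)" by (cases u) auto
  have le': "l1 \<le> u1" "l2 \<le> u2" "l3 \<le> u3" using le[of "(1,0,0)"] le[of "(0,1,0)"] le[of "(0,0,1)"]
    by (auto simp: l u Basis3)
  have eq: "tmapX -` box l u = box (1-u3,1-u2,1-u1) (1-l3,1-l2,1-l1)"
    by (auto simp: tmapX_def l u box_def Basis3)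
  show "emeasure (distr lborel borel tmapX) (box l u) = (\<Prod>b\<in>Basis. (u - l) \<bullet> b)"
    using le'
    by (simp add: emeasure_distr eq[unfolded l u] emeasure_lborel_box_eq prod_Basis3 l u Basis3)
qed simp



lemma left_kernel:
  fixes S :: "'a set" and A :: "'a \<Rightarrow> 'a \<Rightarrow> real"
  assumes fin: "finite S" and ne: "S \<noteq> {}"
    and rows: "\<And>x. x \<in> S \<Longrightarrow> (\<Sum>y\<in>S. A x y) = 0"
  shows "\<exists>v. (\<exists>x\<in>S. v x \<noteq> 0) \<and> (\<forall>y\<in>S. (\<Sum>x\<in>S. v x * A x y) = 0)"
proof -
  define n where "n = card S"
  have n0: "n > 0" using fin ne by (simp add: n_def card_gt_0_iff)
  obtain f where f: "bij_betw f {0..<n} S" using ex_bij_betw_nat_finite[OF fin] n_def by auto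
  define M where "M = mat n n (\<lambda>(i,j). A (f i) (f j))"
  have M: "M \<in> carrier_mat n n" by (simp add: M_def)
  have sumf: "(\<Sum>x\<in>S. g x) = (\<Sum>i<n. g (f i))" for g :: "'a \<Rightarrow> real"
    using sum.reindex_bij_betw[OF f, of g] by (simp add: atLeast0LessThan)
  have "M *\<^sub>v (vec n (\<lambda>_. 1)) = 0\<^sub>v n"
  proof (rule eq_vecI)
    fix i assume i: "i < dim_vec (0\<^sub>v n :: real vec)"
    then have i': "i < n" by simp
    have fi: "f i \<in> S" using f i' by (auto simp: bij_betw_def)
    have "(M *\<^sub>v vec n (\<lambda>_. 1)) $ i = (\<Sum>j<n. A (f i) (f j))"
      using i' by (simp add: M_def scalar_prod_def atLeast0LessThan)
    also have "\<dots> = 0" using rows[OF fi] sumf by simp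
    finally show "(M *\<^sub>v vec n (\<lambda>_. 1)) $ i = 0\<^sub>v n $ i" using i' by simp
  qed (simp add: M_def)
  moreover have "(vec n (\<lambda>_. 1) :: real vec) \<noteq> 0\<^sub>v n"
  proof
    assume "(vec n (\<lambda>_. 1) :: real vec) = 0\<^sub>v n"
    then have "(vec n (\<lambda>_. 1) :: real vec) $ 0 = 0\<^sub>v n $ 0" by simp
    with n0 show False by simp
  qed
  ultimately have "det M = 0" using det_0_iff_vec_prod_zero[OF M]
    by (metis vec_carrier)
  then have "det (transpose_mat M) = 0" using det_transpose[OF M] by simp
  moreover have MT: "transpose_mat M \<in> carrier_mat n n" using M by simp
  ultimately obtain w where w: "w \<in> carrier_vec n" "w \<noteq> 0\<^sub>v n" "transpose_mat M *\<^sub>v w = 0\<^sub>v n"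
    using det_0_iff_vec_prod_zero[OF MT] by blast
  define v where "v x = w $ (inv_into {0..<n} f x)" for x
  have vf: "v (f i) = w $ i" if "i < n" for i
    using that f by (simp add: v_def bij_betw_def inv_into_f_f)
  have "\<exists>x\<in>S. v x \<noteq> 0"
  proof (rule ccontr)
    assume "\<not> ?thesis"
    then have "\<forall>i<n. w $ i = 0" using vf f by (metis atLeastLessThan_iff bij_betwE zero_le)
    then have "w = 0\<^sub>v n" using w(1) by (intro eq_vecI) auto
    with w(2) show False by simp
  qed
  moreover have "\<forall>y\<in>S. (\<Sum>x\<in>S. v x * A x y) = 0"
  proof
    fix y assume y: "y \<in> S"
    then obtain j where j: "j < n" "y = f j" using f
      by (metis atLeastLessThan_iff bij_betw_def imageE)
    have "(\<Sum>x\<in>S. v x * A x y) = (\<Sum>i<n. w $ i * A (f i) (f j))"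
      using sumf vf j by simp
    also have "\<dots> = (transpose_mat M *\<^sub>v w) $ j"
      using j w(1) by (simp add: M_def scalar_prod_def atLeast0LessThan mult.commute)
    also have "\<dots> = 0" using w(3) j by simp
    finally show "(\<Sum>x\<in>S. v x * A x y) = 0" .
  qed
  ultimately show ?thesis by blast
qed



locale mchain =
  fixes S :: "'a set" and P :: "'a \<Rightarrow> 'a \<Rightarrow> real"
  assumes fin: "finite S"
    and nonneg: "\<And>x y. x \<in> S \<Longrightarrow> y \<in> S \<Longrightarrow> 0 \<le> P x y"
    and rowsum: "\<And>x. x \<in> S \<Longrightarrow> (\<Sum>y\<in>S. P x y) = 1"
    and conn: "\<And>Z. Z \<subseteq> S \<Longrightarrow> Z \<noteq> {} \<Longrightarrow> (\<forall>y\<in>Z. \<forall>x\<in>S. 0 < P x y \<longrightarrow> x \<in> Z) \<Longrightarrow> Z = S"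
begin

definition stat :: "('a \<Rightarrow> real) \<Rightarrow> bool" where
  "stat v \<longleftrightarrow> (\<forall>y\<in>S. (\<Sum>x\<in>S. v x * P x y) = v y)"

lemma stat_lin:
  assumes "stat a" "stat b"
  shows "stat (\<lambda>x. \<alpha> * a x + \<beta> * b x)"
  using assms unfolding stat_def
  by (simp add: algebra_simps sum.distrib sum_distrib_left[symmetric] mult.assoc)

lemma stat_abs:
  assumes st: "stat v"
  shows "stat (\<lambda>x. \<bar>v x\<bar>)"
proof -
  define g where "g y = (\<Sum>x\<in>S. \<bar>v x\<bar> * P x y) - \<bar>v y\<bar>" for y
  have g0: "0 \<le> g y" if y: "y \<in> S" for y
  proof -
    have "\<bar>v y\<bar> = \<bar>\<Sum>x\<in>S. v x * P x y\<bar>" using st y by (simp add: stat_def)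
    also have "\<dots> \<le> (\<Sum>x\<in>S. \<bar>v x * P x y\<bar>)" by (rule sum_abs)
    also have "\<dots> = (\<Sum>x\<in>S. \<bar>v x\<bar> * P x y)"
      using nonneg y by (intro sum.cong) (auto simp: abs_mult)
    finally show ?thesis by (simp add: g_def)
  qed
  have "(\<Sum>y\<in>S. g y) = (\<Sum>y\<in>S. \<Sum>x\<in>S. \<bar>v x\<bar> * P x y) - (\<Sum>y\<in>S. \<bar>v y\<bar>)"
    by (simp add: g_def sum_subtractf)
  also have "(\<Sum>y\<in>S. \<Sum>x\<in>S. \<bar>v x\<bar> * P x y) = (\<Sum>x\<in>S. \<bar>v x\<bar> * (\<Sum>y\<in>S. P x y))"
    by (subst sum.swap) (simp add: sum_distrib_left)
  also have "\<dots> = (\<Sum>x\<in>S. \<bar>v x\<bar>)" using rowsum by simp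
  finally have "(\<Sum>y\<in>S. g y) = 0" by simp
  then have "\<forall>y\<in>S. g y = 0" using sum_nonneg_eq_0_iff[OF fin] g0 by blast
  then show ?thesis by (simp add: stat_def g_def)
qed

lemma stat_nonneg_zero:
  assumes st: "stat u" and u0: "\<And>x. x \<in> S \<Longrightarrow> 0 \<le> u x" and y0: "y0 \<in> S" "u y0 = 0"
  shows "\<forall>x\<in>S. u x = 0"
proof -
  define Z where "Z = {y\<in>S. u y = 0}"
  have "Z = S"
  proof (rule conn)
    show "Z \<subseteq> S" "Z \<noteq> {}" using y0 by (auto simp: Z_def)
    show "\<forall>y\<in>Z. \<forall>x\<in>S. 0 < P x y \<longrightarrow> x \<in> Z"
    proof (intro ballI impI)
      fix y x assume y: "y \<in> Z" and x: "x \<in> S" and p: "0 < P x y"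
      have yS: "y \<in> S" and uy: "u y = 0" using y by (auto simp: Z_def)
      have "(\<Sum>x\<in>S. u x * P x y) = 0" using st yS uy by (simp add: stat_def)
      moreover have nn: "\<And>x. x \<in> S \<Longrightarrow> 0 \<le> u x * P x y"
        using u0 nonneg[OF _ yS] by simp
      ultimately have "\<forall>x\<in>S. u x * P x y = 0"
        using sum_nonneg_eq_0_iff[OF fin, of "\<lambda>x. u x * P x y"] nn by simp
      then have "u x * P x y = 0" using x by blast
      then have "u x = 0" using p by simp
      then show "x \<in> Z" using x by (simp add: Z_def)
    qed
  qed
  show ?thesis
  proof
    fix x assume "x \<in> S"
    then have "x \<in> Z" using \<open>Z = S\<close> by simp
    then show "u x = 0" unfolding Z_def by blast
  qed
qed

lemma stat_unique:
  assumes "stat a" "stat b" "(\<Sum>x\<in>S. a x) = 1" "(\<Sum>x\<in>S. b x) = 1"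
  shows "\<forall>x\<in>S. a x = b x"
proof -
  define d where "d x = a x - b x" for x
  have sd: "stat d" using stat_lin[OF assms(1,2), of 1 "-1"] by (simp add: d_def[abs_def])
  have sum0: "(\<Sum>x\<in>S. d x) = 0" using assms(3,4) by (simp add: d_def sum_subtractf)
  define p where "p x = (\<bar>d x\<bar> + d x) / 2" for x
  have sp: "stat p" using stat_lin[OF stat_abs[OF sd] sd, of "1/2" "1/2"]
    by (simp add: p_def[abs_def] add_divide_distrib)
  have dz: "\<forall>x\<in>S. d x = 0"
  proof (cases "\<exists>y0\<in>S. d y0 \<le> 0")
    case True
    then obtain y0 where y0: "y0 \<in> S" "d y0 \<le> 0" by blast
    have "\<forall>x\<in>S. p x = 0"
      by (rule stat_nonneg_zero[OF sp _ y0(1)]) (use y0 in \<open>auto simp: p_def\<close>)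
    then have le: "\<forall>x\<in>S. d x \<le> 0" by (auto simp: p_def)
    then have "\<forall>x\<in>S. - d x = 0"
      using sum_nonneg_eq_0_iff[OF fin, of "\<lambda>x. - d x"] sum0 by (simp add: sum_negf)
    then show ?thesis by simp
  next
    case False
    then have "\<forall>x\<in>S. 0 < d x" by auto
    then have "S = {} \<or> 0 < (\<Sum>x\<in>S. d x)" using fin by (metis sum_pos)
    with sum0 show ?thesis by auto
  qed
  then show ?thesis by (simp add: d_def)
qed

lemma stat_exists:
  assumes ne: "S \<noteq> {}"
  shows "\<exists>\<pi>. (\<forall>x\<in>S. 0 \<le> \<pi> x) \<and> (\<Sum>x\<in>S. \<pi> x) = 1 \<and> stat \<pi>"
proof -
  define A where "A x y = P x y - (if x = y then 1 else 0)" for x y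
  have "(\<Sum>y\<in>S. A x y) = 0" if "x \<in> S" for x
    using that rowsum fin by (simp add: A_def sum_subtractf)
  then obtain v where v: "\<exists>x\<in>S. v x \<noteq> 0" "\<forall>y\<in>S. (\<Sum>x\<in>S. v x * A x y) = 0"
    using left_kernel[OF fin ne] by blast
  have sv: "stat v"
    unfolding stat_def
  proof
    fix y assume y: "y \<in> S"
    have "(\<Sum>x\<in>S. v x * A x y) = (\<Sum>x\<in>S. v x * P x y) - (\<Sum>x\<in>S. v x * (if x = y then 1 else 0))"
      by (simp add: A_def right_diff_distrib sum_subtractf)
    also have "(\<Sum>x\<in>S. v x * (if x = y then 1 else 0)) = v y"
      using y fin by (simp add: if_distrib cong: if_cong)
    finally show "(\<Sum>x\<in>S. v x * P x y) = v y" using v(2) y by simp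
  qed
  define w where "w x = \<bar>v x\<bar>" for x
  have sw: "stat w" using stat_abs[OF sv] by (simp add: w_def[abs_def])
  have pos: "0 < (\<Sum>x\<in>S. w x)"
  proof -
    obtain x0 where x0: "x0 \<in> S" "v x0 \<noteq> 0" using v(1) by blast
    have "w x0 \<le> (\<Sum>x\<in>S. w x)"
      using x0 fin by (intro member_le_sum) (auto simp: w_def)
    moreover have "0 < w x0" using x0 by (simp add: w_def)
    ultimately show ?thesis by simp
  qed
  define \<pi> where "\<pi> x = w x / (\<Sum>x\<in>S. w x)" for x
  have "stat \<pi>" using stat_lin[OF sw sw, of "1 / (\<Sum>x\<in>S. w x)" 0] by (simp add: \<pi>_def[abs_def])
  moreover have "(\<Sum>x\<in>S. \<pi> x) = 1" using pos by (simp add: \<pi>_def sum_divide_distrib[symmetric])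
  moreover have "\<forall>x\<in>S. 0 \<le> \<pi> x" using pos by (simp add: \<pi>_def w_def)
  ultimately show ?thesis by blast
qed

end



lemma states_eq: "states N = (\<lambda>A i. i \<in> A) ` Pow {..<N}"
proof
  show "states N \<subseteq> (\<lambda>A i. i \<in> A) ` Pow {..<N}"
  proof
    fix x assume x: "x \<in> states N"
    have "x = (\<lambda>i. i \<in> {i. x i})" by simp
    moreover have "{i. x i} \<in> Pow {..<N}" using x by (auto simp: states_def not_less[symmetric])
    ultimately show "x \<in> (\<lambda>A i. i \<in> A) ` Pow {..<N}" by blast
  qed
  show "(\<lambda>A i. i \<in> A) ` Pow {..<N} \<subseteq> states N"
    by (auto simp: states_def)
qed

lemma finite_states: "finite (states N)"
  by (simp add: states_eq)

lemma states_ne: "(\<lambda>_. False) \<in> states N"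
  by (simp add: states_def)

lemma flip_states: "x \<in> states N \<Longrightarrow> i < N \<Longrightarrow> flip x i \<in> states N"
  by (auto simp: states_def flip_def)

lemma flip_flip[simp]: "flip (flip x i) i = x"
  by (auto simp: flip_def)

lemma flip_at[simp]: "flip x i i = (\<not> x i)"
  by (simp add: flip_def)

lemma bit_le: "bit b \<le> 1" by (simp add: bit_def)

lemma midx_le: "midx N x i \<le> 3"
  using bit_le[of "x ((i + N - 1) mod N)"] bit_le[of "x ((i + 1) mod N)"]
  by (simp add: midx_def)

definition tm :: "nat \<Rightarrow> (nat \<Rightarrow> real) \<Rightarrow> (nat \<Rightarrow> bool) \<Rightarrow> nat \<Rightarrow> real" where
  "tm N r x i = (if x i then 1 - r (midx N x i) else r (midx N x i)) / real N"

definition dg :: "nat \<Rightarrow> (nat \<Rightarrow> real) \<Rightarrow> (nat \<Rightarrow> bool) \<Rightarrow> real" where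
  "dg N r x = (\<Sum>i<N. if x i then r (midx N x i) else 1 - r (midx N x i)) / real N"

lemma trans_eq: "Defs.trans N r x y =
   (\<Sum>i<N. if y = flip x i then tm N r x i else 0) + (if y = x then dg N r x else 0)"
  by (simp only: Defs.trans_def tm_def dg_def)

definition okr :: "(nat \<Rightarrow> real) \<Rightarrow> bool" where
  "okr r \<longleftrightarrow> (\<forall>m. 0 < r m \<and> r m < 1)"

lemma tm_pos: "okr r \<Longrightarrow> 0 < N \<Longrightarrow> 0 < tm N r x i"
  by (auto simp: okr_def tm_def)

lemma dg_nonneg: "okr r \<Longrightarrow> 0 \<le> dg N r x"
  unfolding dg_def okr_def
  by (intro divide_nonneg_nonneg sum_nonneg) (auto simp: less_imp_le)

lemma trans_nonneg: "okr r \<Longrightarrow> 0 < N \<Longrightarrow> 0 \<le> Defs.trans N r x y"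
  unfolding trans_eq
  by (intro add_nonneg_nonneg sum_nonneg) (auto simp: dg_nonneg less_imp_le[OF tm_pos])

lemma trans_flip_pos:
  assumes "okr r" "0 < N" "i < N"
  shows "0 < Defs.trans N r (flip y i) y"
proof -
  have "0 < tm N r (flip y i) i" using tm_pos assms by blast
  also have "tm N r (flip y i) i \<le> (\<Sum>j<N. if y = flip (flip y i) j then tm N r (flip y i) j else 0)"
    using member_le_sum[of i "{..<N}" "\<lambda>j. if y = flip (flip y i) j then tm N r (flip y i) j else 0"]
      assms by (auto simp: less_imp_le[OF tm_pos])
  also have "\<dots> \<le> Defs.trans N r (flip y i) y"
    unfolding trans_eq using dg_nonneg[OF assms(1)] by simp
  finally show ?thesis .
qed

lemma trans_rowsum:
  assumes "0 < N" and x: "x \<in> states N"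
  shows "(\<Sum>y\<in>states N. Defs.trans N r x y) = 1"
proof -
  have "(\<Sum>y\<in>states N. Defs.trans N r x y)
     = (\<Sum>i<N. \<Sum>y\<in>states N. if y = flip x i then tm N r x i else 0)
       + (\<Sum>y\<in>states N. if y = x then dg N r x else 0)"
    unfolding trans_eq by (simp add: sum.distrib sum.swap[of _ "states N" "{..<N}"])
  also have "\<dots> = (\<Sum>i<N. tm N r x i) + dg N r x"
    using x flip_states[OF x] by (simp add: finite_states sum.delta)
  also have "\<dots> = (\<Sum>i<N. (if x i then 1 - r (midx N x i) else r (midx N x i))
                 + (if x i then r (midx N x i) else 1 - r (midx N x i))) / real N"
    by (simp add: tm_def dg_def sum_divide_distrib[symmetric] sum.distrib add_divide_distrib)
  also have "(\<Sum>i<N. (if x i then 1 - r (midx N x i) else r (midx N x i))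
                 + (if x i then r (midx N x i) else 1 - r (midx N x i))) = (\<Sum>i<N. 1)"
    by (intro sum.cong) auto
  finally show ?thesis using assms(1) by simp
qed

lemma trans_conn:
  assumes ok: "okr r" and N: "0 < N"
    and Z: "Z \<subseteq> states N" "Z \<noteq> {}"
    and cl: "\<forall>y\<in>Z. \<forall>x\<in>states N. 0 < Defs.trans N r x y \<longrightarrow> x \<in> Z"
  shows "Z = states N"
proof
  show "Z \<subseteq> states N" by fact
  show "states N \<subseteq> Z"
  proof
    fix z assume z: "z \<in> states N"
    obtain y0 where y0: "y0 \<in> Z" using Z by blast
    have y0s: "y0 \<in> states N" using y0 Z by blast
    define w where "w k = (\<lambda>j. if j < k then z j else y0 j)" for k
    have ws: "w k \<in> states N" for k using z y0s by (auto simp: states_def w_def)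
    have "k \<le> N \<longrightarrow> w k \<in> Z" for k
    proof (induction k)
      case 0
      have "w 0 = y0" by (simp add: w_def)
      then show ?case using y0 by simp
    next
      case (Suc k)
      show ?case
      proof
        assume k: "Suc k \<le> N"
        then have wk: "w k \<in> Z" using Suc by simp
        show "w (Suc k) \<in> Z"
        proof (cases "z k = y0 k")
          case True
          then have "w (Suc k) = w k" by (auto simp: w_def less_Suc_eq)
          then show ?thesis using wk by simp
        next
          case False
          then have eq: "w (Suc k) = flip (w k) k"
            by (auto simp: w_def flip_def less_Suc_eq)
          have "w k = flip (w (Suc k)) k" using eq by simp
          then have "0 < Defs.trans N r (w (Suc k)) (w k)"
            using trans_flip_pos[OF ok N, of k "w k"] k by simp
          then show ?thesis using cl wk ws by blast
        qed
      qed
    qed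
    moreover have "w N = z" using z y0s by (auto simp: w_def states_def fun_eq_iff)
    ultimately show "z \<in> Z" by auto
  qed
qed

lemma mchain_trans: assumes ok: "okr r" and N: "0 < N" shows "mchain (states N) (Defs.trans N r)"
  apply unfold_locales
     apply (simp add: finite_states)
    apply (simp add: trans_nonneg ok N)
   apply (simp add: trans_rowsum N)
  apply (rule trans_conn[OF ok N])
    apply assumption+
  done

lemma ex1_stationary:
  assumes ok: "okr r" and N: "0 < N"
  shows "\<exists>!\<pi>. is_stationary N r \<pi>"
proof -
  interpret mc: mchain "states N" "Defs.trans N r" using mchain_trans[OF ok N] .
  have iff: "is_stationary N r \<pi> \<longleftrightarrow> (\<forall>x. x \<notin> states N \<longrightarrow> \<pi> x = 0) \<and> (\<forall>x\<in>states N. 0 \<le> \<pi> x)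
     \<and> (\<Sum>x\<in>states N. \<pi> x) = 1 \<and> mc.stat \<pi>" for \<pi>
    by (simp add: is_stationary_def mc.stat_def)
  obtain \<pi>0 where p0: "\<forall>x\<in>states N. 0 \<le> \<pi>0 x" "(\<Sum>x\<in>states N. \<pi>0 x) = 1" "mc.stat \<pi>0"
    using mc.stat_exists states_ne by blast
  define \<pi> where "\<pi> x = (if x \<in> states N then \<pi>0 x else 0)" for x
  have "is_stationary N r \<pi>"
    unfolding iff using p0 by (simp add: \<pi>_def mc.stat_def cong: sum.cong)
  moreover have "\<pi>' = \<pi>" if "is_stationary N r \<pi>'" for \<pi>'
  proof -
    have "\<forall>x\<in>states N. \<pi>' x = \<pi> x"
      using mc.stat_unique[of \<pi>' \<pi>] that \<open>is_stationary N r \<pi>\<close> unfolding iff by blast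
    moreover have "\<forall>x. x \<notin> states N \<longrightarrow> \<pi>' x = \<pi> x"
      using that \<open>is_stationary N r \<pi>\<close> unfolding iff by simp
    ultimately show ?thesis by (metis ext)
  qed
  ultimately show ?thesis by blast
qed



definition cmp :: "nat \<Rightarrow> (nat \<Rightarrow> bool) \<Rightarrow> (nat \<Rightarrow> bool)" where
  "cmp N x = (\<lambda>i. i < N \<and> \<not> x i)"

lemma cmp_states: "cmp N x \<in> states N"
  by (simp add: cmp_def states_def)

lemma cmp_cmp: "x \<in> states N \<Longrightarrow> cmp N (cmp N x) = x"
  by (auto simp: cmp_def states_def fun_eq_iff) (meson not_le)

lemma cmp_lt: "i < N \<Longrightarrow> cmp N x i = (\<not> x i)"
  by (simp add: cmp_def)

lemma cmp_bij: "bij_betw (cmp N) (states N) (states N)"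
  by (rule bij_betw_byWitness[where f'="cmp N"]) (auto simp: cmp_cmp cmp_states)

lemma cmp_inj: "x \<in> states N \<Longrightarrow> y \<in> states N \<Longrightarrow> cmp N x = cmp N y \<longleftrightarrow> x = y"
  by (metis cmp_cmp)

lemma midx_cmp: "0 < N \<Longrightarrow> midx N (cmp N x) i = 3 - midx N x i"
  by (simp add: midx_def cmp_def bit_def)

lemma flip_cmp: "i < N \<Longrightarrow> flip (cmp N x) i = cmp N (flip x i)"
  by (auto simp: flip_def cmp_def fun_eq_iff)

lemma trans_cmp:
  assumes N: "0 < N" and x: "x \<in> states N" and y: "y \<in> states N"
    and rr: "\<And>m. m \<le> 3 \<Longrightarrow> r' m = 1 - r (3 - m)"
  shows "Defs.trans N r' (cmp N x) (cmp N y) = Defs.trans N r x y"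
proof -
  have r'm: "r' (midx N (cmp N x) i) = 1 - r (midx N x i)" for i
    using rr[of "3 - midx N x i"] midx_le[of N x i] by (simp add: midx_cmp[OF N])
  have a: "(\<Sum>i<N. if cmp N y = flip (cmp N x) i then tm N r' (cmp N x) i else 0)
        = (\<Sum>i<N. if y = flip x i then tm N r x i else 0)"
  proof (intro sum.cong refl)
    fix i assume i: "i \<in> {..<N}"
    have "cmp N y = flip (cmp N x) i \<longleftrightarrow> y = flip x i"
      using i flip_cmp[of i N x] cmp_inj[OF y flip_states[OF x]] by simp
    moreover have "tm N r' (cmp N x) i = tm N r x i"
      using i by (simp add: tm_def r'm cmp_lt)
    ultimately show "(if cmp N y = flip (cmp N x) i then tm N r' (cmp N x) i else 0)
        = (if y = flip x i then tm N r x i else 0)" by simp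
  qed
  have b: "dg N r' (cmp N x) = dg N r x"
    unfolding dg_def by (intro arg_cong[where f="\<lambda>s. s / real N"] sum.cong refl) (simp add: r'm cmp_lt)
  show ?thesis unfolding trans_eq a b using cmp_inj[OF y x] by simp
qed

lemma par4_sym: "m \<le> 3 \<Longrightarrow> par4 (1-r3) (1-r2) (1-r1) (1-r0) m = 1 - par4 r0 r1 r2 r3 (3 - m)"
proof -
  assume "m \<le> 3"
  then have "m = 0 \<or> m = 1 \<or> m = 2 \<or> m = 3" by arith
  then show ?thesis by (auto simp: par4_def)
qed

lemma okr_par4: "0 < r0 \<Longrightarrow> r0 < 1 \<Longrightarrow> 0 < r1 \<Longrightarrow> r1 < 1 \<Longrightarrow> 0 < r2 \<Longrightarrow> r2 < 1 \<Longrightarrow> 0 < r3 \<Longrightarrow> r3 < 1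
  \<Longrightarrow> okr (par4 r0 r1 r2 r3)"
  by (simp add: okr_def par4_def)

lemma stat_dist_is:
  assumes "okr r" "0 < N"
  shows "is_stationary N r (stat_dist N r)"
  unfolding stat_dist_def using theI'[OF ex1_stationary[OF assms]] .

lemma stat_dist_eq:
  assumes "okr r" "0 < N" "is_stationary N r \<pi>"
  shows "stat_dist N r = \<pi>"
  unfolding stat_dist_def using ex1_stationary[OF assms(1,2)] assms(3) by (metis the1_equality)

lemma mu_sym:
  assumes N: "0 < N"
    and h: "0 < r0" "r0 < 1" "0 < r1" "r1 < 1" "0 < r2" "r2 < 1" "0 < r3" "r3 < 1"
  shows "mu N (1-r3) (1-r2) (1-r1) (1-r0) = - mu N r0 r1 r2 r3"
proof -
  define r where "r = par4 r0 r1 r2 r3"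
  define r' where "r' = par4 (1-r3) (1-r2) (1-r1) (1-r0)"
  have ok: "okr r" using h by (simp add: r_def okr_par4)
  have ok': "okr r'" using h by (simp add: r'_def okr_par4)
  have rr: "\<And>m. m \<le> 3 \<Longrightarrow> r' m = 1 - r (3 - m)" by (simp add: r_def r'_def par4_sym)
  have r'm: "r' (midx N (cmp N x) i) = 1 - r (midx N x i)" for x i
    using rr[of "3 - midx N x i"] midx_le[of N x i] by (simp add: midx_cmp[OF N])
  define \<pi> where "\<pi> = stat_dist N r"
  have st: "is_stationary N r \<pi>" unfolding \<pi>_def by (rule stat_dist_is[OF ok N])
  define \<pi>' where "\<pi>' x = (if x \<in> states N then \<pi> (cmp N x) else 0)" for x
  have reidx: "(\<Sum>x\<in>states N. g (cmp N x)) = (\<Sum>x\<in>states N. g x)" for g :: "_ \<Rightarrow> real"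
    using sum.reindex_bij_betw[OF cmp_bij, of g N] .
  have st': "is_stationary N r' \<pi>'"
    unfolding is_stationary_def
  proof (intro conjI ballI allI impI)
    show "\<pi>' x = 0" if "x \<notin> states N" for x using that by (simp add: \<pi>'_def)
    show "0 \<le> \<pi>' x" if "x \<in> states N" for x
      using that st cmp_states by (simp add: \<pi>'_def is_stationary_def)
    have "(\<Sum>x\<in>states N. \<pi>' x) = (\<Sum>x\<in>states N. \<pi> (cmp N x))" by (simp add: \<pi>'_def)
    also have "\<dots> = 1" using reidx[of \<pi>] st by (simp add: is_stationary_def)
    finally show "(\<Sum>x\<in>states N. \<pi>' x) = 1" .
    fix y assume y: "y \<in> states N"
    have "(\<Sum>x\<in>states N. \<pi>' x * Defs.trans N r' x y) = (\<Sum>x\<in>states N. \<pi> (cmp N x) * Defs.trans N r' x y)"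
      by (simp add: \<pi>'_def)
    also have "\<dots> = (\<Sum>x\<in>states N. \<pi> (cmp N (cmp N x)) * Defs.trans N r' (cmp N x) y)"
      using reidx[of "\<lambda>x. \<pi> (cmp N x) * Defs.trans N r' x y"] by simp
    also have "\<dots> = (\<Sum>x\<in>states N. \<pi> x * Defs.trans N r x (cmp N y))"
    proof (intro sum.cong refl)
      fix x assume x: "x \<in> states N"
      have "Defs.trans N r' (cmp N x) y = Defs.trans N r' (cmp N x) (cmp N (cmp N y))"
        using cmp_cmp[OF y] by simp
      also have "\<dots> = Defs.trans N r x (cmp N y)"
        by (rule trans_cmp[where r'=r' and r=r, OF N x cmp_states rr])
      finally show "\<pi> (cmp N (cmp N x)) * Defs.trans N r' (cmp N x) y = \<pi> x * Defs.trans N r x (cmp N y)"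
        using cmp_cmp[OF x] by simp
    qed
    also have "\<dots> = \<pi> (cmp N y)" using st cmp_states by (simp add: is_stationary_def)
    also have "\<dots> = \<pi>' y" using y by (simp add: \<pi>'_def)
    finally show "(\<Sum>x\<in>states N. \<pi>' x * Defs.trans N r' x y) = \<pi>' y" .
  qed
  have sd': "stat_dist N r' = \<pi>'" by (rule stat_dist_eq[OF ok' N st'])
  have "mu N (1-r3) (1-r2) (1-r1) (1-r0)
      = (\<Sum>x\<in>states N. \<pi>' x * (\<Sum>i<N. (r' (midx N x i) - (1 - r' (midx N x i))) / real N))"
    by (simp add: mu_def r'_def[symmetric] sd' Let_def)
  also have "\<dots> = (\<Sum>x\<in>states N. \<pi> (cmp N x) * (\<Sum>i<N. (r' (midx N x i) - (1 - r' (midx N x i))) / real N))"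
    by (simp add: \<pi>'_def)
  also have "\<dots> = (\<Sum>x\<in>states N. \<pi> (cmp N (cmp N x)) * (\<Sum>i<N. (r' (midx N (cmp N x) i) - (1 - r' (midx N (cmp N x) i))) / real N))"
    using reidx[of "\<lambda>x. \<pi> (cmp N x) * (\<Sum>i<N. (r' (midx N x i) - (1 - r' (midx N x i))) / real N)"] by simp
  also have "\<dots> = (\<Sum>x\<in>states N. - (\<pi> x * (\<Sum>i<N. (r (midx N x i) - (1 - r (midx N x i))) / real N)))"
  proof (intro sum.cong refl)
    fix x assume x: "x \<in> states N"
    have "(\<Sum>i<N. (r' (midx N (cmp N x) i) - (1 - r' (midx N (cmp N x) i))) / real N)
        = - (\<Sum>i<N. (r (midx N x i) - (1 - r (midx N x i))) / real N)"
      by (simp add: r'm sum_negf[symmetric]) (intro sum.cong refl, simp add: field_simps)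
    then show "\<pi> (cmp N (cmp N x)) * (\<Sum>i<N. (r' (midx N (cmp N x) i) - (1 - r' (midx N (cmp N x) i))) / real N)
       = - (\<pi> x * (\<Sum>i<N. (r (midx N x i) - (1 - r (midx N x i))) / real N))"
      using cmp_cmp[OF x] by simp
  qed
  also have "\<dots> = - mu N r0 r1 r2 r3"
    by (simp add: mu_def r_def[symmetric] \<pi>_def[symmetric] Let_def sum_negf)
  finally show ?thesis .
qed



lemma emeasure_tmapX_vimage: "emeasure lborel (tmapX -` A) = emeasure lborel A"
proof (cases "A \<in> sets lborel")
  case True
  have "emeasure lborel A = emeasure (distr lborel borel tmapX) A" by (simp add: distr_tmapX)
  also have "\<dots> = emeasure lborel (tmapX -` A \<inter> space lborel)"
    using True by (intro emeasure_distr) auto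
  finally show ?thesis by simp
next
  case False
  have tmapXtmapX: "tmapX (tmapX x) = x" for x by (cases x) (auto simp: tmapX_def)
  have "tmapX -` (tmapX -` A) = A" unfolding vimage_def by (simp add: tmapXtmapX)
  moreover have "tmapX -` (tmapX -` A) \<in> sets lborel" if "tmapX -` A \<in> sets lborel"
    using measurable_sets[OF tmapX_meas, of "tmapX -` A"] that by simp
  ultimately have "tmapX -` A \<notin> sets lborel" using False by auto
  then show ?thesis using False by (simp add: emeasure_notin_sets)
qed

theorem theorem2:
  fixes N :: nat
  assumes "3 \<le> N"
  shows "(\<forall>p0 p1 p3. (p0, p1, p3) \<in> unit_open_cube \<longrightarrow>
            ((p0, p1, p3) \<in> parrondo_region N \<longleftrightarrow>
             (1 - p3, 1 - p1, 1 - p0) \<in> anti_parrondo_region N))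
       \<and> emeasure lborel (parrondo_region N) = emeasure lborel (anti_parrondo_region N)"
proof -
  have N: "0 < N" using assms by simp
  have key: "(p0, p1, p3) \<in> parrondo_region N \<longleftrightarrow> (1 - p3, 1 - p1, 1 - p0) \<in> anti_parrondo_region N"
    if c: "(p0, p1, p3) \<in> unit_open_cube" for p0 p1 p3
  proof -
    have h: "0 < p0" "p0 < 1" "0 < p1" "p1 < 1" "0 < p3" "p3 < 1" using c by (auto simp: unit_open_cube_def)
    have c': "(1 - p3, 1 - p1, 1 - p0) \<in> unit_open_cube" using h by (auto simp: unit_open_cube_def)
    have B: "muB N (1 - p3) (1 - p1) (1 - p0) = - muB N p0 p1 p3"
      unfolding muB_def using mu_sym[OF N h(1,2,3,4,3,4,5,6)] .
    have e: "(1/2 + (1 - p)) / 2 = 1 - (1/2 + p) / 2" for p :: real by (simp add: field_simps)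
    have C: "muC N (1 - p3) (1 - p1) (1 - p0) = - muC N p0 p1 p3"
      unfolding muC_def e using h by (intro mu_sym[OF N]) auto
    show ?thesis using c c' B C by (auto simp: parrondo_region_def anti_parrondo_region_def)
  qed
  have reg: "parrondo_region N = tmapX -` anti_parrondo_region N"
  proof (rule Set.set_eqI)
    fix x :: "real \<times> real \<times> real"
    obtain p0 p1 p3 where x: "x = (p0, p1, p3)" by (cases x) auto
    show "x \<in> parrondo_region N \<longleftrightarrow> x \<in> tmapX -` anti_parrondo_region N"
    proof (cases "x \<in> unit_open_cube")
      case True
      then show ?thesis using key[of p0 p1 p3] by (simp add: x tmapX_def)
    next
      case False
      then have "(1 - p3, 1 - p1, 1 - p0) \<notin> unit_open_cube" by (auto simp: x unit_open_cube_def)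
      then show ?thesis using False
        by (auto simp: x tmapX_def parrondo_region_def anti_parrondo_region_def)
    qed
  qed
  show ?thesis using key reg emeasure_tmapX_vimage by auto
qed


end
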